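(* Let $d\ge2$ be an integer, let $C>1$, let $K$ be a compact subset of $\mathbb{C}^*$ and let $L$ be a compact subset of the set of monic polynomials of degree $d$. There exists a constant $A>0$ such that, if $b\in\mathbb{C}$ satisfies $|b|>A$, then for every $N\ge1$ and all $\alpha_1,\ldots,\alpha_N\in K$ and $P_1,\ldots,P_N\in L$, the map $f:=f_N\circ\cdots\circ f_1$, where $f_i(z):=P_i(z)-b\alpha_i$, is hyperbolic with an expanding constant larger than $C$.
   Context: The set of monic degree $d$ polynomials is identified with $\mathbb{C}^d$ via coefficients. A polynomial $f$ is hyperbolic with expanding constant larger than $C$ if it is uniformly expanding on its Julia set with expansion factor larger than $C$ (i.e. $|f'|>C$ on the Julia set of $f$). *)

theory Defs
  imports "HOL-Analysis.Analysis" "HOL-Computational_Algebra.Polynomial"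
begin

definition filled_julia :: "(complex \<Rightarrow> complex) \<Rightarrow> complex set" where
  "filled_julia f = {z. bounded (range (\<lambda>n. (f ^^ n) z))}"

definition julia_set :: "(complex \<Rightarrow> complex) \<Rightarrow> complex set" where
  "julia_set f = frontier (filled_julia f)"

definition hyperbolic_expanding :: "(complex \<Rightarrow> complex) \<Rightarrow> real \<Rightarrow> bool" where
  "hyperbolic_expanding f C \<longleftrightarrow> (\<forall>z\<in>julia_set f. C < norm (deriv f z))"

text \<open>Coefficient vector of a polynomial (product topology on nat => complex; for monic
  degree d polynomials this is homeomorphic to the usual identification with C^d).\<close>
definition poly_coeffs :: "complex poly \<Rightarrow> (nat \<Rightarrow> complex)" where
  "poly_coeffs p = (\<lambda>i. coeff p i)"

primrec comp_seq :: "(nat \<Rightarrow> 'a \<Rightarrow> 'a) \<Rightarrow> nat \<Rightarrow> 'a \<Rightarrow> 'a" where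
  "comp_seq f 0 = id"
| "comp_seq f (Suc n) = f (Suc n) \<circ> comp_seq f n"

end

theory Submission
  imports Defs
begin

lemma poly_tail_bound:
  fixes p :: "complex poly"
  assumes "degree p = n" "n \<ge> 1" "\<forall>j<n. norm (coeff p j) \<le> B"
  shows "norm (poly p w - coeff p n * w^n) \<le> real n * B * (max 1 (norm w))^(n-1)"
proof -
  define M where "M = max 1 (norm w)"
  have M1: "M \<ge> 1" and Mw: "norm w \<le> M" unfolding M_def by auto
  have "norm (coeff p 0) \<le> B" using assms(2,3) by simp
  hence B0: "B \<ge> 0" using norm_ge_zero order_trans by blast
  have "poly p w = (\<Sum>i\<le>n. coeff p i * w ^ i)" using poly_altdef assms(1) by metis
  also have "\<dots> = (\<Sum>i<n. coeff p i * w ^ i) + coeff p n * w^n"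
    by (simp add: lessThan_Suc_atMost[symmetric])
  finally have "poly p w - coeff p n * w^n = (\<Sum>i<n. coeff p i * w ^ i)" by simp
  hence "norm (poly p w - coeff p n * w^n) \<le> (\<Sum>i<n. norm (coeff p i * w ^ i))"
    by (simp add: norm_sum)
  also have "\<dots> \<le> (\<Sum>i<n. B * M^(n-1))"
  proof (rule sum_mono)
    fix i assume i: "i \<in> {..<n}"
    have "norm (w^i) \<le> M^i" by (simp add: norm_power power_mono Mw)
    also have "M^i \<le> M^(n-1)" using i M1 by (intro power_increasing) auto
    finally have "norm (w^i) \<le> M^(n-1)" .
    thus "norm (coeff p i * w ^ i) \<le> B * M^(n-1)"
      using assms(3) i B0 by (simp add: norm_mult mult_mono)
  qed
  also have "\<dots> = real n * B * M^(n-1)" by simp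
  finally show ?thesis unfolding M_def .
qed

lemma escape:
  fixes P :: "complex poly"
  assumes d2: "d \<ge> 2" and lc: "lead_coeff P = 1" and dg: "degree P = d"
    and cb: "\<forall>j<d. norm (coeff P j) \<le> B" and B0: "B \<ge> 0"
    and aR: "norm a \<le> Ra" and wR: "norm w \<ge> R" and R8: "R \<ge> 8 + 4*d*B"
    and R2: "R^2 \<ge> 2*Ra*norm b"
  shows "norm (poly P w - b*a) \<ge> 2 * norm w"
proof -
  define x where "x = norm w"
  define y where "y = x^(d-2)"
  have x8: "x \<ge> 8 + 4*d*B" using wR R8 x_def by linarith
  have x1: "x \<ge> 1" using x8 B0 by (smt (verit) of_nat_0_le_iff mult_nonneg_nonneg)
  have y1: "y \<ge> 1" unfolding y_def using x1 by simp
  have "d = 2 + (d-2)" using d2 by simp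
  hence xd: "x^d = x^2 * y" unfolding y_def by (metis power_add)
  have xd1: "x^(d-1) = x * y" unfolding y_def using d2
    by (metis Suc_diff_Suc Suc_1 diff_Suc_1 numeral_2_eq_2 power_Suc Suc_le_lessD)
  have tb: "norm (poly P w - coeff P d * w^d) \<le> real d * B * (max 1 (norm w))^(d-1)"
    using poly_tail_bound[of P d B w] dg cb d2 by simp
  have cd: "coeff P d = 1" using lc dg by simp
  have "max 1 (norm w) = x" using x1 x_def by simp
  hence tb2: "norm (poly P w - w^d) \<le> d * B * (x * y)" using tb cd xd1 by simp
  have nwd: "norm (w^d) = x^2 * y" using xd x_def by (simp add: norm_power)
  have nba: "norm (b*a) \<le> norm b * Ra" using aR by (simp add: norm_mult mult_left_mono)
  have "norm (w^d) \<le> norm (poly P w - b*a) + norm (poly P w - w^d) + norm (b*a)"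
    by (smt (verit) norm_triangle_ineq4 norm_triangle_ineq norm_minus_commute add_diff_cancel diff_add_cancel)
  hence main: "x^2*y \<le> norm (poly P w - b*a) + d*B*(x*y) + norm b * Ra"
    using nwd tb2 nba by linarith
  have i1: "d*B*(x*y) \<le> x^2*y/4"
  proof -
    have "4*(d*B) \<le> x" using x8 by simp
    hence "4*(d*B)*(x*y) \<le> x*(x*y)" using x1 y1 by (intro mult_right_mono) auto
    thus ?thesis by (simp add: power2_eq_square algebra_simps)
  qed
  have i2: "norm b * Ra \<le> x^2*y/2"
  proof -
    have "R^2 \<le> x^2" using wR x_def R8 B0
      by (smt (verit) of_nat_0_le_iff mult_nonneg_nonneg power_mono)
    hence "2*(norm b * Ra) \<le> x^2" using R2 by (simp add: algebra_simps)
    also have "x^2 \<le> x^2*y" using y1 mult_left_mono[of 1 y "x^2"] by simp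
    finally show ?thesis by simp
  qed
  have i3: "2*x \<le> x^2*y/4"
  proof -
    have "4*d*B \<ge> 0" using B0 by simp
    hence "8 \<le> x" using x8 by linarith
    hence "8*x \<le> x*x" using x1 by (intro mult_right_mono) auto
    also have "x*x \<le> x^2*y" using y1 x1 by (simp add: power2_eq_square)
    finally show ?thesis by simp
  qed
  show ?thesis using main i1 i2 i3 x_def by linarith
qed

lemma small_w:
  fixes P :: "complex poly"
  assumes d2: "d \<ge> 2" and lc: "lead_coeff P = 1" and dg: "degree P = d"
    and cb: "\<forall>j<d. norm (coeff P j) \<le> B" and B0: "B \<ge> 0"
    and wT: "norm w \<le> T" and T1: "T \<ge> 1"
  shows "norm (poly P w) \<le> (1 + d*B) * T^d"
proof -
  have tb: "norm (poly P w - coeff P d * w^d) \<le> real d * B * (max 1 (norm w))^(d-1)"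
    using poly_tail_bound[of P d B w] dg cb d2 by simp
  have cd: "coeff P d = 1" using lc dg by simp
  have m: "max 1 (norm w) \<le> T" using wT T1 by simp
  have "(max 1 (norm w))^(d-1) \<le> T^(d-1)" using m by (intro power_mono) auto
  also have "T^(d-1) \<le> T^d" using T1 by (intro power_increasing) auto
  finally have "real d * B * (max 1 (norm w))^(d-1) \<le> real d * B * T^d"
    using B0 by (intro mult_left_mono) auto
  hence t2: "norm (poly P w - w^d) \<le> d * B * T^d" using tb cd by simp
  have "norm (w^d) \<le> T^d" using wT by (simp add: norm_power power_mono)
  moreover have "norm (poly P w) \<le> norm (w^d) + norm (poly P w - w^d)"
    by (rule norm_triangle_sub)
  ultimately show ?thesis using t2 by (simp add: algebra_simps)
qed

lemma deriv_big:
  fixes P :: "complex poly"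
  assumes d2: "d \<ge> 2" and lc: "lead_coeff P = 1" and dg: "degree P = d"
    and cb: "\<forall>j<d. norm (coeff P j) \<le> B" and B0: "B \<ge> 0"
    and wT: "norm w \<ge> T" and T1: "T \<ge> 1 + 2*d*B + 4*C" and C0: "C \<ge> 0"
  shows "norm (poly (pderiv P) w) \<ge> 2*C"
proof -
  define x where "x = norm w"
  define y where "y = x^(d-2)"
  have xT: "x \<ge> 1 + 2*d*B + 4*C" using wT T1 x_def by linarith
  have x1: "x \<ge> 1" using xT B0 C0 by (smt (verit) of_nat_0_le_iff mult_nonneg_nonneg)
  have y1: "y \<ge> 1" unfolding y_def using x1 by simp
  have xd1: "x^(d-1) = x * y" unfolding y_def using d2
    by (metis Suc_diff_Suc Suc_1 diff_Suc_1 numeral_2_eq_2 power_Suc Suc_le_lessD)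
  have dgp: "degree (pderiv P) = d - 1" using dg by (simp add: degree_pderiv)
  have cbp: "\<forall>j<d-1. norm (coeff (pderiv P) j) \<le> d*B"
  proof (intro allI impI)
    fix j assume j: "j < d - 1"
    have "norm (coeff (pderiv P) j) = real (Suc j) * norm (coeff P (Suc j))"
      by (simp only: coeff_pderiv norm_mult norm_of_nat)
    also have "\<dots> \<le> d * B" using j cb B0
      by (intro mult_mono) auto
    finally show "norm (coeff (pderiv P) j) \<le> d*B" .
  qed
  have tb: "norm (poly (pderiv P) w - coeff (pderiv P) (d-1) * w^(d-1))
      \<le> real (d-1) * (d*B) * (max 1 (norm w))^(d-1-1)"
    using poly_tail_bound[of "pderiv P" "d-1" "d*B" w] dgp cbp d2 by simp
  have cd: "coeff (pderiv P) (d-1) = of_nat d"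
    using lc dg d2 by (simp add: coeff_pderiv)
  have "max 1 (norm w) = x" using x1 x_def by simp
  hence tb2: "norm (poly (pderiv P) w - of_nat d * w^(d-1)) \<le> real (d-1) * (d*B) * y"
    using tb cd y_def by (simp add: numeral_2_eq_2)
  have "real (d-1) * (d*B) * y \<le> d * (d*B) * y" using B0 y1
    by (intro mult_right_mono mult_right_mono) auto
  hence tb3: "norm (poly (pderiv P) w - of_nat d * w^(d-1)) \<le> d * (d*B) * y" using tb2 by linarith
  have nwd: "norm (of_nat d * w^(d-1) :: complex) = d * (x * y)"
    using xd1 x_def by (simp add: norm_mult norm_power)
  have "norm (of_nat d * w^(d-1) :: complex) \<le> norm (poly (pderiv P) w) + norm (poly (pderiv P) w - of_nat d * w^(d-1))"
    by (metis norm_triangle_ineq4 norm_minus_commute diff_diff_cancel add.commute norm_triangle_ineq add_diff_cancel_left' diff_add_cancel)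
  hence main: "d*(x*y) \<le> norm (poly (pderiv P) w) + d*(d*B)*y" using nwd tb3 by linarith
  have dB0: "real d * B \<ge> 0" using B0 by simp
  have "d * (d*B) * y + 2*C \<le> d * (x*y)"
  proof -
    have "d*(d*B)*y + 2*C \<le> d*(d*B)*y + d*(2*C)*y"
    proof -
      have "2*C \<le> 2*C*y" using C0 y1 mult_left_mono[of 1 y "2*C"] by simp
      also have "\<dots> \<le> d*(2*C*y)" using d2 C0 y1 mult_right_mono[of 1 "real d" "2*C*y"] by simp
      finally show ?thesis by (simp add: algebra_simps)
    qed
    also have "\<dots> = d*((d*B + 2*C)*y)" by (simp add: algebra_simps)
    also have "\<dots> \<le> d*(x*y)" using xT y1 dB0 C0 by (intro mult_left_mono mult_right_mono) auto
    finally show ?thesis .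
  qed
  thus ?thesis using main by linarith
qed

lemma comp_seq_deriv:
  fixes P :: "nat \<Rightarrow> complex poly" and c :: "nat \<Rightarrow> complex"
  shows "(comp_seq (\<lambda>i z. poly (P i) z - c i) n has_field_derivative
           (\<Prod>k\<in>{1..n}. poly (pderiv (P k)) (comp_seq (\<lambda>i z. poly (P i) z - c i) (k-1) z))) (at z)"
proof (induction n)
  case 0
  then show ?case by simp
next
  case (Suc n)
  let ?g = "comp_seq (\<lambda>i z. poly (P i) z - c i)"
  have d1: "((\<lambda>z. poly (P (Suc n)) z - c (Suc n)) has_field_derivative
           poly (pderiv (P (Suc n))) (?g n z)) (at (?g n z))"
    by (auto intro!: derivative_eq_intros)
  have "((\<lambda>z. poly (P (Suc n)) z - c (Suc n)) \<circ> ?g n has_field_derivative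
      poly (pderiv (P (Suc n))) (?g n z) * (\<Prod>k\<in>{1..n}. poly (pderiv (P k)) (?g (k-1) z))) (at z)"
    using DERIV_chain[OF d1 Suc.IH] by (simp add: o_def)
  moreover have "(\<Prod>k\<in>{1..Suc n}. poly (pderiv (P k)) (?g (k-1) z))
      = poly (pderiv (P (Suc n))) (?g n z) * (\<Prod>k\<in>{1..n}. poly (pderiv (P k)) (?g (k-1) z))"
    by (simp add: prod.nat_ivl_Suc' mult.commute)
  ultimately show ?case by (simp add: o_def mult.commute)
qed

theorem lemma2p2:
  fixes d :: nat and C :: real and K :: "complex set" and L :: "complex poly set"
  assumes "d \<ge> 2" and "C > 1"
    and "compact K" and "K \<subseteq> - {0}"
    and "\<forall>P\<in>L. lead_coeff P = 1 \<and> degree P = d"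
    and "compact (poly_coeffs ` L)"
  shows "\<exists>A>0. \<forall>b::complex. norm b > A \<longrightarrow>
           (\<forall>N\<ge>1. \<forall>(\<alpha>::nat \<Rightarrow> complex) (P::nat \<Rightarrow> complex poly).
              (\<forall>i\<in>{1..N}. \<alpha> i \<in> K \<and> P i \<in> L) \<longrightarrow>
              hyperbolic_expanding (comp_seq (\<lambda>i z. poly (P i) z - b * \<alpha> i) N) C)"
proof -
  note d2 = assms(1) and C1 = assms(2)
  obtain r where r0: "r > 0" and rK: "\<forall>a\<in>K. r \<le> norm a"
  proof -
    have "0 \<notin> K" using assms(4) by auto
    then obtain r where "r > 0" "\<forall>x\<in>K. r \<le> dist 0 x"
      using separate_point_closed[of K 0] compact_imp_closed[OF assms(3)] by blast
    thus ?thesis using that by auto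
  qed
  obtain Ra where Ra0: "Ra > 0" and RaK: "\<forall>a\<in>K. norm a \<le> Ra"
    using compact_imp_bounded[OF assms(3)] bounded_pos by blast
  have "\<forall>j. \<exists>Bj. \<forall>Q\<in>L. norm (coeff Q j) \<le> Bj"
  proof
    fix j
    have "compact ((\<lambda>f. f j) ` poly_coeffs ` L)"
      by (rule compact_continuous_image[OF continuous_on_subset[OF continuous_on_product_coordinates] assms(6)]) simp
    then obtain Bj where "\<forall>x\<in>(\<lambda>f. f j) ` poly_coeffs ` L. norm x \<le> Bj"
      using compact_imp_bounded bounded_iff by metis
    thus "\<exists>Bj. \<forall>Q\<in>L. norm (coeff Q j) \<le> Bj" by (auto simp: poly_coeffs_def)
  qed
  then obtain Bf where Bf: "\<forall>j. \<forall>Q\<in>L. norm (coeff Q j) \<le> Bf j" by metis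
  define B where "B = (\<Sum>j<d. max 0 (Bf j))"
  have B0: "B \<ge> 0" unfolding B_def by (intro sum_nonneg) auto
  have cb: "\<forall>Q\<in>L. \<forall>j<d. norm (coeff Q j) \<le> B"
  proof (intro ballI allI impI)
    fix Q j assume Q: "Q \<in> L" and j: "j < d"
    have "norm (coeff Q j) \<le> max 0 (Bf j)" using Bf Q by (meson max.coboundedI2)
    also have "\<dots> \<le> B" unfolding B_def
      by (rule member_le_sum[of j "{..<d}" "\<lambda>j. max 0 (Bf j)"]) (use j in auto)
    finally show "norm (coeff Q j) \<le> B" .
  qed
  define c where "c = 8 + 4*d*B + 2*Ra"
  define T where "T = 1 + 2*d*B + 4*C"
  define A where "A = 1 + (2*c/r)^2 + 2*(1+d*B)*T^d/r"
  have dB0: "real d * B \<ge> 0" using B0 by simp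
  have c8: "c \<ge> 8 + 4*d*B" and cRa: "c \<ge> 2*Ra" and c1: "c \<ge> 1"
    unfolding c_def using dB0 Ra0 by auto
  have T1: "T \<ge> 1" unfolding T_def using dB0 C1 by auto
  have q0: "2*(1+d*B)*T^d/r \<ge> 0" using dB0 T1 r0 by simp
  have q1: "(2*c/r)^2 \<ge> 0" by simp
  have A0: "A > 0" unfolding A_def using q0 q1 by linarith
  show ?thesis
  proof (intro exI[of _ A] conjI allI impI A0)
    fix b :: complex and N :: nat and \<alpha> :: "nat \<Rightarrow> complex" and P :: "nat \<Rightarrow> complex poly"
    assume bA: "norm b > A" and N1: "N \<ge> 1" and hyp: "\<forall>i\<in>{1..N}. \<alpha> i \<in> K \<and> P i \<in> L"
    define R where "R = c * sqrt (norm b)"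
    have b1: "norm b \<ge> 1" using bA A_def q0 q1 by linarith
    have sb1: "sqrt (norm b) \<ge> 1" using b1 by simp
    have "c * 1 \<le> c * sqrt (norm b)" using c1 by (intro mult_left_mono[OF sb1]) simp
    hence R8: "R \<ge> 8 + 4*d*B" unfolding R_def using c8 by linarith
    have R0: "R > 0" using R8 dB0 by linarith
    have R2: "R^2 \<ge> 2*Ra*norm b"
    proof -
      have "R^2 = c^2 * norm b" unfolding R_def by (simp add: power_mult_distrib)
      moreover have "c^2 \<ge> 2*Ra" proof -
        have "c * 1 \<le> c * c" using c1 by (intro mult_left_mono) auto
        thus ?thesis using cRa by (simp add: power2_eq_square)
      qed
      ultimately show ?thesis using b1 by (simp add: mult_right_mono)
    qed
    have Rr: "R \<le> norm b * r / 2"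
    proof -
      have "(2*c/r)^2 \<le> norm b" using bA A_def q0 q1 by linarith
      hence "2*c/r \<le> sqrt (norm b)" using real_le_rsqrt by blast
      hence "2*c \<le> sqrt (norm b) * r" using r0 by (simp add: field_simps)
      hence "2*c * sqrt (norm b) \<le> sqrt (norm b) * r * sqrt (norm b)"
        using sb1 by (intro mult_right_mono) auto
      also have "\<dots> = norm b * r" by (simp add: algebra_simps)
      finally show ?thesis unfolding R_def by simp
    qed
    have bT: "norm b * r / 2 > (1 + d*B) * T^d"
    proof -
      have "2*(1+d*B)*T^d/r < norm b" using bA A_def q0 q1 by linarith
      thus ?thesis using r0 by (simp add: field_simps)
    qed
    define F where "F = (\<lambda>i z. poly (P i) z - b * \<alpha> i)"
    define g where "g = comp_seq F"
    define f where "f = g N"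
    have gS: "g (Suc n) z = F (Suc n) (g n z)" for n z unfolding g_def by simp
    have Fd: "(g n has_field_derivative (\<Prod>k\<in>{1..n}. poly (pderiv (P k)) (g (k-1) z))) (at z)" for n z
      unfolding g_def F_def using comp_seq_deriv[of P "\<lambda>i. b * \<alpha> i" n z] by simp
    have gc: "continuous_on UNIV (g n)" for n
      using Fd by (meson DERIV_isCont continuous_at_imp_continuous_on)
    have PL: "lead_coeff (P i) = 1" "degree (P i) = d" "\<forall>j<d. norm (coeff (P i) j) \<le> B"
      and aK: "r \<le> norm (\<alpha> i)" "norm (\<alpha> i) \<le> Ra" if "i \<in> {1..N}" for i
      using hyp that assms(5) cb rK RaK by auto
    have grow: "norm (F i w) \<ge> 2 * norm w" if "i \<in> {1..N}" "norm w \<ge> R" for i w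
      unfolding F_def using escape[OF d2 PL(1,2,3)[OF that(1)] B0 aK(2)[OF that(1)] that(2) R8 R2] .
    define S where "S = (\<Inter>k\<in>{..N}. {z. norm (g k z) \<le> R})"
    have Sc: "closed S" unfolding S_def
      by (intro closed_INT ballI closed_Collect_le continuous_on_norm gc continuous_on_const)
    have fS: "norm (f u) \<ge> 2 * norm u" if "norm u \<ge> R" for u
    proof -
      have "j \<le> N \<longrightarrow> norm (g j u) \<ge> 2^j * norm u" for j
      proof (induction j)
        case 0 then show ?case by (simp add: g_def)
      next
        case (Suc j)
        show ?case
        proof
          assume j: "Suc j \<le> N"
          have "norm (g j u) \<ge> 2^j * norm u" using Suc j by simp
          moreover have "2^j * norm u \<ge> norm u" using mult_right_mono[of 1 "2^j" "norm u"] by simp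
          ultimately have "norm (g j u) \<ge> R" using that by linarith
          hence "norm (F (Suc j) (g j u)) \<ge> 2 * norm (g j u)" using grow j by simp
          thus "norm (g (Suc j) u) \<ge> 2^Suc j * norm u" using gS \<open>norm (g j u) \<ge> 2^j * norm u\<close> by simp
        qed
      qed
      hence "norm (f u) \<ge> 2^N * norm u" unfolding f_def by simp
      moreover have "(2::real)^N \<ge> 2" using N1 self_le_power[of 2 N] by simp
      ultimately show ?thesis using mult_right_mono[of 2 "2^N" "norm u"] by simp
    qed
    have filledS: "filled_julia f \<subseteq> S"
    proof
      fix z assume z: "z \<in> filled_julia f"
      show "z \<in> S"
      proof (rule ccontr)
        assume "z \<notin> S"
        then obtain k where k: "k \<le> N" "norm (g k z) > R" unfolding S_def by force
        have "k \<le> j \<longrightarrow> j \<le> N \<longrightarrow> norm (g j z) \<ge> norm (g k z)" for j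
        proof (induction j)
          case 0 then show ?case by simp
        next
          case (Suc j)
          show ?case
          proof (intro impI)
            assume h: "k \<le> Suc j" "Suc j \<le> N"
            show "norm (g (Suc j) z) \<ge> norm (g k z)"
            proof (cases "k = Suc j")
              case False
              hence "norm (g j z) \<ge> norm (g k z)" using Suc h by simp
              hence "norm (F (Suc j) (g j z)) \<ge> 2 * norm (g j z)" using grow h k by simp
              moreover have "norm (g (Suc j) z) = norm (F (Suc j) (g j z))" using gS by simp
              ultimately show ?thesis using \<open>norm (g j z) \<ge> norm (g k z)\<close> norm_ge_zero[of "g j z"] by linarith
            qed simp
          qed
        qed
        hence fz: "norm (f z) > R" unfolding f_def using k by force
        have orb: "norm ((f^^n) (f z)) \<ge> 2^n * norm (f z)" for n
        proof (induction n)
          case 0 then show ?case by simp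
        next
          case (Suc n)
          have "2^n * norm (f z) \<ge> norm (f z)" using mult_right_mono[of 1 "2^n" "norm (f z)"] by simp
          hence "norm ((f^^n) (f z)) \<ge> R" using Suc fz by linarith
          hence "norm (f ((f^^n) (f z))) \<ge> 2 * norm ((f^^n) (f z))" using fS by blast
          thus ?case using Suc by simp
        qed
        from z obtain M where M: "\<forall>x\<in>range (\<lambda>n. (f ^^ n) z). norm x \<le> M"
          unfolding filled_julia_def bounded_iff by blast
        obtain n :: nat where n: "M / norm (f z) < real n" using reals_Archimedean2 by blast
        have fz0: "norm (f z) > 0" using fz R0 by linarith
        have "real n < 2^n" by (rule of_nat_less_two_power)
        hence "real n * norm (f z) < 2^n * norm (f z)" using fz0 by (rule mult_strict_right_mono)
        moreover have "M < real n * norm (f z)" using n fz0 by (simp add: pos_divide_less_eq)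
        ultimately have "M < 2^n * norm (f z)" by linarith
        also have "\<dots> \<le> norm ((f^^Suc n) z)" using orb[of n] by (simp add: funpow_Suc_right del: funpow.simps)
        finally have "M < norm ((f^^Suc n) z)" .
        moreover have "(f^^Suc n) z \<in> range (\<lambda>n. (f ^^ n) z)" by (rule rangeI)
        hence "norm ((f^^Suc n) z) \<le> M" using M by blast
        ultimately show False by linarith
      qed
    qed
    have juliaS: "julia_set f \<subseteq> S"
      unfolding julia_set_def frontier_def using closure_minimal[OF filledS Sc] by blast
    show "hyperbolic_expanding (comp_seq (\<lambda>i z. poly (P i) z - b * \<alpha> i) N) C"
      unfolding hyperbolic_expanding_def
    proof
      fix z assume "z \<in> julia_set (comp_seq (\<lambda>i z. poly (P i) z - b * \<alpha> i) N)"
      hence zS: "z \<in> S" using juliaS unfolding f_def g_def F_def by blast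
      have big: "norm (poly (pderiv (P k)) (g (k-1) z)) \<ge> 2*C" if k: "k \<in> {1..N}" for k
      proof -
        let ?w = "g (k-1) z"
        have w1: "norm ?w \<le> R" using zS k unfolding S_def by auto
        have "g k z = F k ?w" using gS[of "k-1" z] k by simp
        moreover have "norm (g k z) \<le> R" using zS k unfolding S_def by auto
        ultimately have w2: "norm (F k ?w) \<le> R" by simp
        have "poly (P k) ?w = F k ?w + b * \<alpha> k" unfolding F_def by simp
        hence "norm (b * \<alpha> k) \<le> norm (poly (P k) ?w) + norm (F k ?w)"
          by (metis add_diff_cancel_left' norm_triangle_ineq4 add.commute)
        moreover have "norm (b * \<alpha> k) \<ge> norm b * r"
          using aK(1)[OF k] by (simp add: norm_mult mult_left_mono)
        ultimately have "norm (poly (P k) ?w) \<ge> norm b * r / 2" using w2 Rr by linarith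
        hence "norm (poly (P k) ?w) > (1 + d*B) * T^d" using bT by linarith
        hence "norm ?w \<ge> T" using small_w[where P="P k" and d=d and B=B and w="g (k-1) z" and T=T] d2 PL(1,2,3)[OF k] B0 T1 by force
        thus ?thesis using deriv_big[where P="P k" and d=d and B=B and w="g (k-1) z" and T=T and C=C] d2 PL(1,2,3)[OF k] B0 T_def C1 by simp
      qed
      have "norm (\<Prod>k\<in>{1..N}. poly (pderiv (P k)) (g (k-1) z)) = (\<Prod>k\<in>{1..N}. norm (poly (pderiv (P k)) (g (k-1) z)))"
        by (simp add: prod_norm)
      also have "\<dots> \<ge> (\<Prod>k\<in>{1..N}. 2*C)"
        using big C1 by (intro prod_mono) auto
      hence "norm (\<Prod>k\<in>{1..N}. poly (pderiv (P k)) (g (k-1) z)) \<ge> (2*C)^N"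
        using calculation by simp
      moreover have "(2*C)^N \<ge> 2*C" using N1 C1 by (intro self_le_power) auto
      moreover have "deriv f z = (\<Prod>k\<in>{1..N}. poly (pderiv (P k)) (g (k-1) z))"
        unfolding f_def using Fd by (rule DERIV_imp_deriv)
      ultimately have "norm (deriv f z) > C" using C1 by simp
      thus "C < norm (deriv (comp_seq (\<lambda>i z. poly (P i) z - b * \<alpha> i) N) z)"
        unfolding f_def g_def F_def by simp
    qed
  qed
qed

end
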